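(* Let $X$ and $Y$ be connected finite undirected graphs, each with $n$ vertices, and let $p>n$ be a prime. Let $Z$ be the disjoint union of $p$ connected components $Z_1,\ldots,Z_p$, where $Z_i$ is an isomorphic copy of $X$ for each $1\le i<p$ and $Z_p$ is an isomorphic copy of $Y$. If the cyclic group $\mathbb{Z}/p\mathbb{Z}$ is representable on $Z$, then $X$ and $Y$ are isomorphic.
   Context: For a graph $W$, $\mathrm{Aut}(W)$ denotes its automorphism group (permutations of the vertex set mapping edges to edges and non-edges to non-edges). A finite group $G$ is said to be representable on a graph $W$ if there exists a nontrivial homomorphism from $G$ to $\mathrm{Aut}(W)$ (i.e. one not mapping every element to the identity). *)

theory Defs
  imports "HOL-Algebra.Elementary_Groups" "HOL-Algebra.Bij" "HOL-Computational_Algebra.Primes"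
begin

definition fin_graph :: "'a set \<Rightarrow> ('a \<Rightarrow> 'a \<Rightarrow> bool) \<Rightarrow> bool" where
  "fin_graph V E \<longleftrightarrow> finite V \<and> (\<forall>u v. E u v \<longrightarrow> u \<in> V \<and> v \<in> V)
     \<and> (\<forall>u v. E u v \<longrightarrow> E v u) \<and> (\<forall>u. \<not> E u u)"

definition connected_graph :: "'a set \<Rightarrow> ('a \<Rightarrow> 'a \<Rightarrow> bool) \<Rightarrow> bool" where
  "connected_graph V E \<longleftrightarrow> V \<noteq> {} \<and> (\<forall>u\<in>V. \<forall>v\<in>V. E\<^sup>*\<^sup>* u v)"

definition graph_iso :: "'a set \<Rightarrow> ('a \<Rightarrow> 'a \<Rightarrow> bool) \<Rightarrow> 'b set \<Rightarrow> ('b \<Rightarrow> 'b \<Rightarrow> bool) \<Rightarrow> bool" where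
  "graph_iso V E V' E' \<longleftrightarrow> (\<exists>f. bij_betw f V V' \<and> (\<forall>u\<in>V. \<forall>v\<in>V. E u v \<longleftrightarrow> E' (f u) (f v)))"

definition aut_group :: "'a set \<Rightarrow> ('a \<Rightarrow> 'a \<Rightarrow> bool) \<Rightarrow> ('a \<Rightarrow> 'a) monoid" where
  "aut_group V E =
    \<lparr>carrier = {f \<in> Bij V. \<forall>u\<in>V. \<forall>v\<in>V. E u v \<longleftrightarrow> E (f u) (f v)},
     monoid.mult = \<lambda>g\<in>Bij V. \<lambda>f\<in>Bij V. compose V g f,
     one = \<lambda>x\<in>V. x\<rparr>"

definition representable :: "'g monoid \<Rightarrow> 'a set \<Rightarrow> ('a \<Rightarrow> 'a \<Rightarrow> bool) \<Rightarrow> bool" where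
  "representable G V E \<longleftrightarrow>
     (\<exists>h \<in> hom G (aut_group V E). \<exists>g \<in> carrier G. h g \<noteq> \<one>\<^bsub>aut_group V E\<^esub>)"

definition union_verts :: "nat \<Rightarrow> 'a set \<Rightarrow> 'a set \<Rightarrow> (nat \<times> 'a) set" where
  "union_verts p V1 V2 = {(i, v). 1 \<le> i \<and> i < p \<and> v \<in> V1} \<union> {(i, v). i = p \<and> v \<in> V2}"

definition union_edges :: "nat \<Rightarrow> ('a \<Rightarrow> 'a \<Rightarrow> bool) \<Rightarrow> ('a \<Rightarrow> 'a \<Rightarrow> bool)
    \<Rightarrow> (nat \<times> 'a) \<Rightarrow> (nat \<times> 'a) \<Rightarrow> bool" where
  "union_edges p E1 E2 = (\<lambda>(i, u) (j, v). i = j \<and>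
      ((1 \<le> i \<and> i < p \<and> E1 u v) \<or> (i = p \<and> E2 u v)))"

end

theory Submission imports Defs begin
lemma funpow_fix_mult:
  assumes "(f ^^ d) x = x" shows "(f ^^ (d * a)) x = x"
proof (induction a)
  case 0 then show ?case by simp
next
  case (Suc a)
  have "(f ^^ (d * Suc a)) x = (f ^^ d) ((f ^^ (d * a)) x)"
    by (simp add: funpow_add add.commute)
  then show ?case using Suc assms by simp
qed

lemma orbit_fix:
  fixes f :: "'b \<Rightarrow> 'b" and p :: nat
  assumes fin: "finite S" and cardS: "card S < p" and pr: "prime p"
    and cl: "\<And>y. y \<in> S \<Longrightarrow> f y \<in> S"
    and per: "\<And>y. y \<in> S \<Longrightarrow> (f ^^ p) y = y"
    and x: "x \<in> S"
  shows "f x = x"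
proof -
  have inS: "(f ^^ k) x \<in> S" for k
    by (induction k) (auto simp: x cl)
  have "(\<lambda>k. (f ^^ k) x) ` {0..<p} \<subseteq> S" using inS by auto
  then have "card ((\<lambda>k. (f ^^ k) x) ` {0..<p}) < p"
    using card_mono[OF fin] cardS by (meson le_less_trans)
  then have ninj: "\<not> inj_on (\<lambda>k. (f ^^ k) x) {0..<p}"
  proof (intro notI)
    assume "card ((\<lambda>k. (f ^^ k) x) ` {0..<p}) < p" "inj_on (\<lambda>k. (f ^^ k) x) {0..<p}"
    then show False by (simp add: card_image)
  qed
  obtain a b where ab: "a \<in> {0..<p}" "b \<in> {0..<p}" "(f ^^ a) x = (f ^^ b) x" "a \<noteq> b"
    using ninj unfolding inj_on_def by blast
  obtain i j where ij: "i < j" "j < p" "(f ^^ i) x = (f ^^ j) x"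
  proof (cases "a < b")
    case True then show ?thesis using that[of a b] ab by simp
  next
    case False then have "b < a" using ab(4) by simp
    then show ?thesis using that[of b a] ab by simp
  qed
  define d where "d = j - i"
  have d: "0 < d" "d < p" using ij d_def by auto
  have px: "(f ^^ p) x = x" using per x by simp
  have "(f ^^ (p - i)) ((f ^^ i) x) = (f ^^ (p - i + i)) x"
    by (simp add: funpow_add)
  also have "p - i + i = p" using ij by simp
  finally have "(f ^^ (p - i)) ((f ^^ i) x) = x" using px by simp
  moreover have "(f ^^ (p - i)) ((f ^^ j) x) = (f ^^ d) x"
  proof -
    have "(f ^^ (p - i)) ((f ^^ j) x) = (f ^^ (p - i + j)) x"
      by (simp add: funpow_add)
    also have "p - i + j = d + p" using ij d_def by simp
    finally have "(f ^^ (p - i)) ((f ^^ j) x) = (f ^^ (d + p)) x" .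
    also have "\<dots> = (f ^^ d) x" using px by (simp add: funpow_add)
    finally show ?thesis .
  qed
  ultimately have dx: "(f ^^ d) x = x" using ij by simp
  have "coprime d p" using d pr
    by (metis coprime_commute dvd_imp_le not_less prime_imp_coprime_nat)
  then obtain a b where ab: "d * a = p * b + 1"
    using bezout_nat[of d p] d by (auto simp: coprime_iff_gcd_eq_1)
  have "(f ^^ (d * a)) x = x" by (rule funpow_fix_mult[OF dx])
  moreover have "(f ^^ (p * b + 1)) x = f ((f ^^ (p * b)) x)"
    by simp
  moreover have "(f ^^ (p * b)) x = x" by (rule funpow_fix_mult[OF px])
  ultimately show ?thesis using ab by simp
qed

theorem mainTheorem2:
  fixes V1 V2 :: "'a set" and E1 E2 :: "'a \<Rightarrow> 'a \<Rightarrow> bool" and n p :: nat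
  assumes "fin_graph V1 E1" and "fin_graph V2 E2"
    and "connected_graph V1 E1" and "connected_graph V2 E2"
    and "card V1 = n" and "card V2 = n"
    and "prime p" and "p > n"
    and "representable (integer_mod_group p) (union_verts p V1 V2) (union_edges p E1 E2)"
  shows "graph_iso V1 E1 V2 E2"
proof -
  note fg1 = assms(1) and fg2 = assms(2) and c1 = assms(3) and c2 = assms(4)
  define V where "V = union_verts p V1 V2"
  define E where "E = union_edges p E1 E2"
  define G where "G = integer_mod_group p"
  define A where "A = aut_group V E"
  have p2: "p \<ge> 2" using assms(7) prime_ge_2_nat by blast
  have carG: "carrier G = {0..<int p}" using p2 by (simp add: G_def carrier_integer_mod_group)
  obtain h g where h: "h \<in> hom G A" and g: "g \<in> carrier G" and hg: "h g \<noteq> \<one>\<^bsub>A\<^esub>"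
    using assms(9) unfolding representable_def V_def E_def G_def A_def by blast
  have Vmem: "z \<in> V \<longleftrightarrow> (1 \<le> fst z \<and> fst z < p \<and> snd z \<in> V1) \<or> (fst z = p \<and> snd z \<in> V2)" for z
    by (cases z) (auto simp: V_def union_verts_def)
  have Emem: "E (i, x) (j, y) \<longleftrightarrow> i = j \<and> ((1 \<le> i \<and> i < p \<and> E1 x y) \<or> (i = p \<and> E2 x y))" for i j x y
    by (simp add: E_def union_edges_def)
  have hcar: "h a \<in> Bij V \<and> (\<forall>u\<in>V. \<forall>v\<in>V. E u v \<longleftrightarrow> E (h a u) (h a v))" if "a \<in> carrier G" for a
    using h that unfolding hom_def A_def aut_group_def by auto
  have hmul: "h ((a + b) mod int p) = compose V (h a) (h b)" if "a \<in> carrier G" "b \<in> carrier G" for a b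
  proof -
    have "h (a \<otimes>\<^bsub>G\<^esub> b) = h a \<otimes>\<^bsub>A\<^esub> h b" using h that by (simp add: hom_mult)
    then show ?thesis using hcar[OF that(1)] hcar[OF that(2)]
      by (simp add: G_def A_def aut_group_def)
  qed
  have bijh: "bij_betw (h a) V V" if "a \<in> carrier G" for a
    using hcar[OF that] by (simp add: Bij_def)
  define \<sigma> where "\<sigma> = h 1"
  have one_car: "(1::int) \<in> carrier G" using carG p2 by auto
  have zero_car: "(0::int) \<in> carrier G" using carG p2 by auto
  have bs: "bij_betw \<sigma> V V" using bijh[OF one_car] \<sigma>_def by simp
  have sV: "\<sigma> z \<in> V" if "z \<in> V" for z using bs that bij_betwE by blast
  have sinj: "inj_on \<sigma> V" using bs bij_betw_def by blast
  have sE: "E u v \<longleftrightarrow> E (\<sigma> u) (\<sigma> v)" if "u \<in> V" "v \<in> V" for u v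
    using hcar[OF one_car] that \<sigma>_def by auto
  have h0: "h 0 x = x" if "x \<in> V" for x
  proof -
    have "h 0 = compose V (h 0) (h 0)" using hmul[OF zero_car zero_car] by simp
    then have "h 0 (h 0 x) = h 0 x" using that by (metis compose_eq)
    moreover have "h 0 x \<in> V" using bijh[OF zero_car] that bij_betwE by blast
    ultimately show ?thesis using bijh[OF zero_car] that unfolding bij_betw_def inj_on_def by blast
  qed
  have hpow: "\<forall>x\<in>V. h (int k mod int p) x = (\<sigma> ^^ k) x" for k
  proof (induction k)
    case 0 then show ?case using h0 by simp
  next
    case (Suc k)
    have kc: "int k mod int p \<in> carrier G" using carG p2 by auto
    have eq: "int (Suc k) mod int p = (int k mod int p + 1) mod int p" by (metis mod_add_left_eq of_nat_Suc add.commute)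
    show ?case
    proof
      fix x assume x: "x \<in> V"
      have "h (int (Suc k) mod int p) x = compose V (h (int k mod int p)) \<sigma> x"
        using hmul[OF kc one_car] eq \<sigma>_def by simp
      also have "\<dots> = (\<sigma> ^^ k) (\<sigma> x)" using x sV Suc by (simp add: compose_eq)
      finally show "h (int (Suc k) mod int p) x = (\<sigma> ^^ Suc k) x" by (simp only: funpow_Suc_right comp_apply)
    qed
  qed
  have sp: "(\<sigma> ^^ p) x = x" if "x \<in> V" for x
    using hpow[of p] h0 that by simp
  have notid: "\<exists>x\<in>V. \<sigma> x \<noteq> x"
  proof (rule ccontr)
    assume "\<not> ?thesis"
    then have fx: "\<sigma> x = x" if "x \<in> V" for x using that by blast
    have fk: "(\<sigma> ^^ k) x = x" if "x \<in> V" for x k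
      by (induction k) (use fx that in auto)
    have gg: "g = int (nat g) mod int p" using g carG by auto
    have "h g x = x" if "x \<in> V" for x
      using hpow[of "nat g"] gg fk that by metis
    moreover have "h g \<in> extensional V" using hcar[OF g] by (simp add: Bij_def)
    ultimately have "h g = (\<lambda>x\<in>V. x)" by (auto simp: extensional_def)
    then show False using hg by (simp add: A_def aut_group_def)
  qed
  have EV: "u \<in> V \<and> v \<in> V" if "E u v" for u v
    using that fg1 fg2 by (cases u; cases v) (auto simp: Emem Vmem fin_graph_def)
  have rfst: "fst a = fst b" if "E\<^sup>*\<^sup>* a b" for a b
    using that by (induction rule: rtranclp_induct) (auto simp: E_def union_edges_def split: prod.splits)
  have rs: "E\<^sup>*\<^sup>* (\<sigma> a) (\<sigma> b)" if "E\<^sup>*\<^sup>* a b" for a b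
    using that
  proof (induction rule: rtranclp_induct)
    case base then show ?case by simp
  next
    case (step b c)
    then have "E (\<sigma> b) (\<sigma> c)" using EV sE by blast
    then show ?case using step by (meson rtranclp.rtrancl_into_rtrancl)
  qed
  have lift1: "E\<^sup>*\<^sup>* (i, x) (i, x')" if "E1\<^sup>*\<^sup>* x x'" "1 \<le> i" "i < p" for i x x'
    using that(1)
  proof (induction rule: rtranclp_induct)
    case base then show ?case by simp
  next
    case (step y z)
    then have "E (i, y) (i, z)" using that by (simp add: Emem)
    then show ?case using step by (meson rtranclp.rtrancl_into_rtrancl)
  qed
  have lift2: "E\<^sup>*\<^sup>* (p, x) (p, x')" if "E2\<^sup>*\<^sup>* x x'" for x x'
    using that
  proof (induction rule: rtranclp_induct)
    case base then show ?case by simp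
  next
    case (step y z)
    then have "E (p, y) (p, z)" by (simp add: Emem)
    then show ?case using step by (meson rtranclp.rtrancl_into_rtrancl)
  qed
  have comp: "fst (\<sigma> (i, x)) = fst (\<sigma> (i, x'))" if "(i, x) \<in> V" "(i, x') \<in> V" for i x x'
  proof -
    have "E\<^sup>*\<^sup>* (i, x) (i, x')"
    proof (cases "i < p")
      case True
      then have "x \<in> V1" "x' \<in> V1" "1 \<le> i" using that Vmem by auto
      then show ?thesis using c1 lift1 True by (auto simp: connected_graph_def)
    next
      case False
      then have "x \<in> V2" "x' \<in> V2" "i = p" using that Vmem by auto
      then show ?thesis using c2 lift2 by (auto simp: connected_graph_def)
    qed
    then show ?thesis using rs rfst by blast
  qed
  obtain x0 where x0: "x0 \<in> V1" using c1 by (auto simp: connected_graph_def)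
  obtain y0 where y0: "y0 \<in> V2" using c2 by (auto simp: connected_graph_def)
  define pick where "pick j = (if j < p then x0 else y0)" for j
  define \<pi> where "\<pi> j = fst (\<sigma> (j, pick j))" for j
  have piter: "fst ((\<sigma> ^^ k) (i, x)) = (\<pi> ^^ k) i \<and> (\<sigma> ^^ k) (i, x) \<in> V" if "(i, x) \<in> V" for k i x
  proof (induction k)
    case 0 then show ?case using that by simp
  next
    case (Suc k)
    define w where "w = (\<sigma> ^^ k) (i, x)"
    have w: "w \<in> V" "fst w = (\<pi> ^^ k) i" using Suc w_def by auto
    have pj: "(fst w, pick (fst w)) \<in> V" using w(1) x0 y0 by (auto simp: Vmem pick_def)
    have ww: "(fst w, snd w) \<in> V" using w(1) by simp
    have "fst (\<sigma> w) = \<pi> (fst w)" using comp[OF ww pj] by (simp add: \<pi>_def)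
    then show ?case using w sV by (simp add: w_def)
  qed
  have fV1: "finite V1" and fV2: "finite V2" using fg1 fg2 by (auto simp: fin_graph_def)
  show ?thesis
  proof (cases "fst (\<sigma> (p, y0)) = p")
    case False
    define j where "j = fst (\<sigma> (p, y0))"
    have py0: "(p, y0) \<in> V" using y0 by (simp add: Vmem)
    have j: "1 \<le> j" "j < p" using sV[OF py0] False Vmem j_def by auto
    define f where "f y = snd (\<sigma> (p, y))" for y
    have sf: "\<sigma> (p, y) = (j, f y) \<and> f y \<in> V1" if "y \<in> V2" for y
    proof -
      have pyV: "(p, y) \<in> V" using that by (simp add: Vmem)
      have fj: "fst (\<sigma> (p, y)) = j" using comp[OF pyV py0] j_def by simp
      have m: "\<sigma> (p, y) \<in> V" using sV[OF pyV] .
      have "snd (\<sigma> (p, y)) \<in> V1" using m fj j by (simp add: Vmem)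
      then show ?thesis using fj by (simp add: f_def prod_eq_iff)
    qed
    have finj: "inj_on f V2"
    proof (rule inj_onI)
      fix y y' assume "y \<in> V2" "y' \<in> V2" "f y = f y'"
      then have "\<sigma> (p, y) = \<sigma> (p, y')" using sf by metis
      moreover have "(p, y) \<in> V" "(p, y') \<in> V" using \<open>y \<in> V2\<close> \<open>y' \<in> V2\<close> by (auto simp: Vmem)
      ultimately show "y = y'" using sinj inj_onD by fastforce
    qed
    have fsub: "f ` V2 \<subseteq> V1" using sf by auto
    have "card (f ` V2) = card V1" using card_image[OF finj] assms(5,6) by simp
    then have fim: "f ` V2 = V1" using card_subset_eq[OF fV1 fsub] by simp
    have fb: "bij_betw f V2 V1" using finj fim by (simp add: bij_betw_def)
    have fe: "E2 u v \<longleftrightarrow> E1 (f u) (f v)" if "u \<in> V2" "v \<in> V2" for u v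
    proof -
      have "E2 u v \<longleftrightarrow> E (p, u) (p, v)" by (simp add: Emem)
      also have "\<dots> \<longleftrightarrow> E (\<sigma> (p, u)) (\<sigma> (p, v))" using sE that by (simp add: Vmem)
      also have "\<dots> \<longleftrightarrow> E1 (f u) (f v)" using sf that j by (simp add: Emem)
      finally show ?thesis .
    qed
    define k where "k = the_inv_into V2 f"
    have kb: "bij_betw k V1 V2" using bij_betw_the_inv_into[OF fb] k_def by simp
    have fk: "f (k u) = u" if "u \<in> V1" for u
      using f_the_inv_into_f_bij_betw[OF fb] that k_def by simp
    have "E1 u v \<longleftrightarrow> E2 (k u) (k v)" if "u \<in> V1" "v \<in> V1" for u v
    proof -
      have "k u \<in> V2" "k v \<in> V2" using kb that bij_betwE by blast+
      then have "E2 (k u) (k v) \<longleftrightarrow> E1 (f (k u)) (f (k v))" using fe by blast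
      then show ?thesis using fk that by simp
    qed
    then show ?thesis unfolding graph_iso_def using kb by blast
  next
    case True
    define Sp where "Sp = {p} \<times> V2"
    have SpV: "Sp \<subseteq> V" by (auto simp: Sp_def Vmem)
    have fixp: "\<sigma> z = z" if "z \<in> Sp" for z
    proof (rule orbit_fix[of Sp p \<sigma>])
      show "finite Sp" using fV2 by (simp add: Sp_def)
      show "card Sp < p" using assms(6,8) by (simp add: Sp_def card_cartesian_product_singleton)
      show "prime p" by (rule assms(7))
      show "\<sigma> y \<in> Sp" if "y \<in> Sp" for y
      proof -
        obtain yy where yy: "y = (p, yy)" "yy \<in> V2" using \<open>y \<in> Sp\<close> by (auto simp: Sp_def)
        have iv: "(p, y0) \<in> V" "(p, yy) \<in> V" using y0 yy by (auto simp: Vmem)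
        have fp: "fst (\<sigma> y) = p" using comp[OF iv(2) iv(1)] True yy(1) by simp
        have m: "\<sigma> y \<in> V" using sV iv(2) yy(1) by simp
        have "snd (\<sigma> y) \<in> V2" using m fp by (simp add: Vmem)
        then show ?thesis using fp by (simp add: Sp_def mem_Times_iff)
      qed
      show "(\<sigma> ^^ p) y = y" if "y \<in> Sp" for y using sp SpV that by blast
      show "z \<in> Sp" by (rule that)
    qed
    have pic: "\<pi> i \<in> {1..<p}" if "i \<in> {1..<p}" for i
    proof -
      have iv: "(i, x0) \<in> V" using that x0 by (auto simp: Vmem)
      have pi: "\<pi> i = fst (\<sigma> (i, x0))" using that by (simp add: \<pi>_def pick_def)
      have "fst (\<sigma> (i, x0)) \<noteq> p"
      proof
        assume a: "fst (\<sigma> (i, x0)) = p"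
        have "snd (\<sigma> (i, x0)) \<in> V2" using sV[OF iv] a by (simp add: Vmem)
        then have "\<sigma> (i, x0) \<in> Sp" using a by (simp add: Sp_def mem_Times_iff)
        then have "\<sigma> (\<sigma> (i, x0)) = \<sigma> (i, x0)" using fixp by blast
        then have "\<sigma> (i, x0) = (i, x0)" using inj_onD[OF sinj _ sV[OF iv] iv] by blast
        then show False using a that by simp
      qed
      then show ?thesis using pi sV[OF iv] by (auto simp: Vmem)
    qed
    have pfix: "\<pi> i = i" if "i \<in> {1..<p}" for i
    proof (rule orbit_fix[of "{1..<p}" p \<pi>])
      show "finite {1..<p}" by simp
      show "card {1..<p} < p" using p2 by simp
      show "prime p" by (rule assms(7))
      show "\<pi> y \<in> {1..<p}" if "y \<in> {1..<p}" for y using pic that by blast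
      show "(\<pi> ^^ p) y = y" if "y \<in> {1..<p}" for y
      proof -
        have iv: "(y, x0) \<in> V" using that x0 by (auto simp: Vmem)
        then show ?thesis using piter[OF iv, of p] sp[OF iv] by simp
      qed
      show "i \<in> {1..<p}" by (rule that)
    qed
    have fixi: "\<sigma> z = z" if "i \<in> {1..<p}" "z \<in> {i} \<times> V1" for i z
    proof (rule orbit_fix[of "{i} \<times> V1" p \<sigma>])
      show "finite ({i} \<times> V1)" using fV1 by simp
      show "card ({i} \<times> V1) < p" using assms(5,8) by (simp add: card_cartesian_product_singleton)
      show "prime p" by (rule assms(7))
      show "\<sigma> y \<in> {i} \<times> V1" if "y \<in> {i} \<times> V1" for y
      proof -
        obtain yy where yy: "y = (i, yy)" "yy \<in> V1" using \<open>y \<in> {i} \<times> V1\<close> by auto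
        have iv: "(i, x0) \<in> V" "(i, yy) \<in> V" using \<open>i \<in> {1..<p}\<close> x0 yy by (auto simp: Vmem)
        have "fst (\<sigma> y) = \<pi> i" using comp[OF iv(2) iv(1)] yy \<open>i \<in> {1..<p}\<close> by (simp add: \<pi>_def pick_def)
        then have "fst (\<sigma> y) = i" using pfix \<open>i \<in> {1..<p}\<close> by simp
        moreover have "\<sigma> y \<in> V" using sV iv yy by simp
        ultimately have "snd (\<sigma> y) \<in> V1" using \<open>i \<in> {1..<p}\<close> by (simp add: Vmem)
        then show ?thesis using \<open>fst (\<sigma> y) = i\<close> by (simp add: mem_Times_iff)
      qed
      show "(\<sigma> ^^ p) y = y" if "y \<in> {i} \<times> V1" for y
      proof -
        have "y \<in> V" using that \<open>i \<in> {1..<p}\<close> by (auto simp: Vmem mem_Times_iff)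
        then show ?thesis using sp by blast
      qed
      show "z \<in> {i} \<times> V1" by (rule that)
    qed
    have "\<sigma> z = z" if "z \<in> V" for z
    proof (cases "fst z = p")
      case True
      have "snd z \<in> V2" using that True by (simp add: Vmem)
      then have "z \<in> Sp" using True by (simp add: Sp_def mem_Times_iff)
      then show ?thesis by (rule fixp)
    next
      case False
      have m: "1 \<le> fst z \<and> fst z < p \<and> snd z \<in> V1" using that False by (simp add: Vmem)
      then have a: "fst z \<in> {1..<p}" by simp
      have b: "z \<in> {fst z} \<times> V1" using m by (simp add: mem_Times_iff)
      show ?thesis by (rule fixi[OF a b])
    qed
    note allfix = this
    obtain x where x: "x \<in> V" "\<sigma> x \<noteq> x" using notid by blast
    have False using allfix[OF x(1)] x(2) by simp
    then show ?thesis by (rule FalseE)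
  qed
qed

end
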